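(* Let $X$ be a compact subanalytic subset of $\mathbb{R}^n$. Let $p\mapsto q_X(p)$ be any function $\mathbb{N}\to\mathbb{N}$ with $q_X(p)\ge p$ such that, for every $p$, every $f:X\to\mathbb{R}$ and every $q\ge q_X(p)$: if $\nabla^qf:\tau^q(X)\to\mathbb{R}$ then $f$ is the restriction of a $\mathcal{C}^p$ function on $\mathbb{R}^n$, and if moreover $a\in X$ and $\nabla^q_af=0$ then $f$ is the restriction of a $\mathcal{C}^p$ function on $\mathbb{R}^n$ that is $p$-flat at $a$. If $s\ge p$ and $q\ge q_X(s)$, then $$\mathcal{T}^s(X)_p\subset\tau^q(X)_p.$$
   Context: Notation. $\mathcal{P}_k$: real polynomials on $\mathbb{R}^n$ of degree $\le k$; $\mathcal{P}_k^*$ dual; $r_k=\dim\mathcal{P}_k$. For $\xi\in\mathcal{P}_k^*$, $b\in\mathbb{R}^n$, $|\alpha|\le k$: $\xi_\alpha(b):=\xi(\tfrac1{\alpha!}(x-b)^\alpha)$; $\delta_a(P)=P(a)$. A bundle over $X$ with fibres in $W$ is a subset of $X\times W$ with linear-subspace fibres. $p$-flat at $a$: all partial derivatives of order $\le p$ vanish at $a$. $T^p_aF$ is the Taylor polynomial of order $p$ of $F$ at $a$. Paratangent bundle of order $k$: for a bundle $E\subset X\times\mathcal{P}_k^*$, $\Delta E=\{(a,b,\xi+\eta):a,b\in X,\xi\in E_a,\eta\in E_b,|a-b|^{k-|\alpha|}|\eta_\alpha(b)|\le1\ \forall|\alpha|\le k\}$, $E'=\{(a,\xi):(a,a,\xi)\in\overline{\Delta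 E}\}$, $\rho(E)=\{(a,\xi):\xi\in\operatorname{Span}E'_a\}$; with $E_0=\{(a,\lambda\delta_a)\}$, $\tau^k(X):=\rho^{2r_k}(E_0)$ (the iterates are constant from $2r_k$ on). For $f:X\to\mathbb{R}$ and bundles $\Phi\subset X\times(\mathcal{P}_k^*\times\mathbb{R})$: $\Delta\Phi=\{(a,b,\xi+\eta,\lambda+\mu):(\xi,\lambda)\in\Phi_a,(\eta,\mu)\in\Phi_b,|a-b|^{k-|\alpha|}|\eta_\alpha(b)|\le1\ \forall|\alpha|\le k\}$, $\Phi'=\{(a,\xi,\lambda):(a,a,\xi,\lambda)\in\overline{\Delta\Phi}\}$, $\rho(\Phi)$ fibrewise span of $\Phi'$; $\nabla^kf:=\rho^{2(r_k+1)}(\Phi_0)$ with $\Phi_0=\{(a,\lambda\delta_a,\lambda f(a))\}$. "$\nabla^kf:\tau^k(X)\to\mathbb{R}$" means each $\xi\in\tau^k_a(X)$ has exactly one $\lambda$ with $(a,\xi,\lambda)\in\nabla^kf$, written $\nabla^k_af(\xi)$; "$\nabla^k_af=0$" means it is $0$ for all $\xi\in\tau^k_a(X)$. For $q\ge p$ and $a\in\mathbb{R}^n$, $\pi_a:\mathcal{P}_q\to\mathcal{P}_p$ truncates $\sum_{|\beta|\le q}c_\beta(x-a)^\beta$ to $\sum_{|\beta|\le p}c_\beta(x-a)^\beta$ and $\iota_a(\xi)=\xi\circ\pi_a$. $\tau^q(X)_p$ has fibres $\iota_a^{-1}(\tau^q_a(X))\subset\mathcal{P}_p^*$. $I^s(X)$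 is the ideal of $\mathcal{C}^s$ functions on $\mathbb{R}^n$ vanishing on $X$. For $s\ge p$, $\mathcal{T}^s(X)_p$ is the bundle over $X$ with fibre $\mathcal{T}^s_a(X)_p=\{\xi\in\mathcal{P}_p^*:\xi(T^p_ah)=0\text{ for all }h\in I^s(X)\}$. *)

theory Defs
  imports "HOL-Analysis.Analysis"
begin

type_synonym 'n rv = "real^'n"

definition mi :: "nat \<Rightarrow> ('n::finite \<Rightarrow> nat) set" where
  "mi k = {\<alpha>. sum \<alpha> UNIV \<le> k}"

definition mdeg :: "('n::finite \<Rightarrow> nat) \<Rightarrow> nat" where
  "mdeg \<alpha> = sum \<alpha> UNIV"

definition afact :: "('n::finite \<Rightarrow> nat) \<Rightarrow> real" where
  "afact \<alpha> = (\<Prod>i\<in>UNIV. fact (\<alpha> i))"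

definition mono_at :: "'n rv \<Rightarrow> ('n::finite \<Rightarrow> nat) \<Rightarrow> 'n rv \<Rightarrow> real" where
  "mono_at b \<alpha> x = (\<Prod>i\<in>UNIV. (x$i - b$i) ^ (\<alpha> i))"

definition Pk :: "nat \<Rightarrow> (('n::finite) rv \<Rightarrow> real) set" where
  "Pk k = {P. \<exists>c. P = (\<lambda>x. \<Sum>\<alpha>\<in>mi k. c \<alpha> * mono_at 0 \<alpha> x)}"

text \<open>P_k^*: linear functionals on P_k, normalised to be 0 off P_k\<close>
definition dualk :: "nat \<Rightarrow> ((('n::finite) rv \<Rightarrow> real) \<Rightarrow> real) set" where
  "dualk k = {\<xi>. (\<forall>P\<in>Pk k. \<forall>Q\<in>Pk k. \<xi> (\<lambda>x. P x + Q x) = \<xi> P + \<xi> Q)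
              \<and> (\<forall>P\<in>Pk k. \<forall>c. \<xi> (\<lambda>x. c * P x) = c * \<xi> P)
              \<and> (\<forall>P. P \<notin> Pk k \<longrightarrow> \<xi> P = 0)}"

text \<open>distance on P_k^* (a norm via the monomial basis; it induces the usual topology)\<close>
definition ddist :: "nat \<Rightarrow> ((('n::finite) rv \<Rightarrow> real) \<Rightarrow> real) \<Rightarrow> (('n rv \<Rightarrow> real) \<Rightarrow> real) \<Rightarrow> real" where
  "ddist k \<xi> \<eta> = (\<Sum>\<alpha>\<in>(mi k :: ('n \<Rightarrow> nat) set). \<bar>\<xi> (mono_at 0 \<alpha>) - \<eta> (mono_at 0 \<alpha>)\<bar>)"

definition deltaf :: "nat \<Rightarrow> ('n::finite) rv \<Rightarrow> ('n rv \<Rightarrow> real) \<Rightarrow> real" where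
  "deltaf k a = (\<lambda>P. if P \<in> Pk k then P a else 0)"

definition xi_alpha :: "((('n::finite) rv \<Rightarrow> real) \<Rightarrow> real) \<Rightarrow> ('n \<Rightarrow> nat) \<Rightarrow> 'n rv \<Rightarrow> real" where
  "xi_alpha \<xi> \<alpha> b = \<xi> (\<lambda>x. mono_at b \<alpha> x / afact \<alpha>)"

definition fspan :: "((('n::finite) rv \<Rightarrow> real) \<Rightarrow> real) set \<Rightarrow> (('n rv \<Rightarrow> real) \<Rightarrow> real) set" where
  "fspan S = {\<xi>. \<exists>F c. finite F \<and> F \<subseteq> S \<and> \<xi> = (\<lambda>P. \<Sum>\<eta>\<in>F. c \<eta> * \<eta> P)}"

definition DeltaE :: "('n::finite) rv set \<Rightarrow> nat \<Rightarrow> ('n rv \<times> (('n rv \<Rightarrow> real) \<Rightarrow> real)) set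
    \<Rightarrow> ('n rv \<times> 'n rv \<times> (('n rv \<Rightarrow> real) \<Rightarrow> real)) set" where
  "DeltaE X k E = {(a, b, \<zeta>). a \<in> X \<and> b \<in> X \<and> (\<exists>\<xi> \<eta>. (a, \<xi>) \<in> E \<and> (b, \<eta>) \<in> E
      \<and> \<zeta> = (\<lambda>P. \<xi> P + \<eta> P)
      \<and> (\<forall>\<alpha>\<in>mi k. dist a b ^ (k - mdeg \<alpha>) * \<bar>xi_alpha \<eta> \<alpha> b\<bar> \<le> 1))}"

definition Eprime :: "('n::finite) rv set \<Rightarrow> nat \<Rightarrow> ('n rv \<times> (('n rv \<Rightarrow> real) \<Rightarrow> real)) set
    \<Rightarrow> ('n rv \<times> (('n rv \<Rightarrow> real) \<Rightarrow> real)) set" where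
  "Eprime X k E = {(a, \<xi>). a \<in> X \<and> \<xi> \<in> dualk k \<and>
      (\<forall>\<epsilon>>0. \<exists>a1 b1 \<xi>1. (a1, b1, \<xi>1) \<in> DeltaE X k E \<and> dist a1 a < \<epsilon> \<and> dist b1 a < \<epsilon>
          \<and> ddist k \<xi>1 \<xi> < \<epsilon>)}"

definition rhoE :: "('n::finite) rv set \<Rightarrow> nat \<Rightarrow> ('n rv \<times> (('n rv \<Rightarrow> real) \<Rightarrow> real)) set
    \<Rightarrow> ('n rv \<times> (('n rv \<Rightarrow> real) \<Rightarrow> real)) set" where
  "rhoE X k E = {(a, \<xi>). a \<in> X \<and> \<xi> \<in> fspan {\<eta>. (a, \<eta>) \<in> Eprime X k E}}"

definition E0 :: "('n::finite) rv set \<Rightarrow> nat \<Rightarrow> ('n rv \<times> (('n rv \<Rightarrow> real) \<Rightarrow> real)) set" where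
  "E0 X k = {(a, \<lambda>P. c * deltaf k a P) | a c. a \<in> X}"

text \<open>r_k = dim P_k = card (mi k)\<close>
definition ptau :: "('n::finite) rv set \<Rightarrow> nat \<Rightarrow> ('n rv \<times> (('n rv \<Rightarrow> real) \<Rightarrow> real)) set" where
  "ptau X k = (rhoE X k ^^ (2 * card (mi k :: ('n \<Rightarrow> nat) set))) (E0 X k)"

type_synonym 'n phib = "('n rv \<times> (('n rv \<Rightarrow> real) \<Rightarrow> real) \<times> real) set"

definition DeltaPhi :: "('n::finite) rv set \<Rightarrow> nat \<Rightarrow> 'n phib
    \<Rightarrow> ('n rv \<times> 'n rv \<times> (('n rv \<Rightarrow> real) \<Rightarrow> real) \<times> real) set" where
  "DeltaPhi X k \<Phi> = {(a, b, \<zeta>, \<nu>). a \<in> X \<and> b \<in> X \<and> (\<exists>\<xi> l \<eta> m. (a, \<xi>, l) \<in> \<Phi> \<and> (b, \<eta>, m) \<in> \<Phi>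
      \<and> \<zeta> = (\<lambda>P. \<xi> P + \<eta> P) \<and> \<nu> = l + m
      \<and> (\<forall>\<alpha>\<in>mi k. dist a b ^ (k - mdeg \<alpha>) * \<bar>xi_alpha \<eta> \<alpha> b\<bar> \<le> 1))}"

definition Phiprime :: "('n::finite) rv set \<Rightarrow> nat \<Rightarrow> 'n phib \<Rightarrow> 'n phib" where
  "Phiprime X k \<Phi> = {(a, \<xi>, l). a \<in> X \<and> \<xi> \<in> dualk k \<and>
      (\<forall>\<epsilon>>0. \<exists>a1 b1 \<xi>1 l1. (a1, b1, \<xi>1, l1) \<in> DeltaPhi X k \<Phi> \<and> dist a1 a < \<epsilon> \<and> dist b1 a < \<epsilon>
          \<and> ddist k \<xi>1 \<xi> < \<epsilon> \<and> \<bar>l1 - l\<bar> < \<epsilon>)}"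

definition rhoPhi :: "('n::finite) rv set \<Rightarrow> nat \<Rightarrow> 'n phib \<Rightarrow> 'n phib" where
  "rhoPhi X k \<Phi> = {(a, \<xi>, l). a \<in> X \<and> (\<exists>F c. finite F \<and> F \<subseteq> {(\<eta>, m). (a, \<eta>, m) \<in> Phiprime X k \<Phi>}
      \<and> \<xi> = (\<lambda>P. \<Sum>(\<eta>, m)\<in>F. c (\<eta>, m) * \<eta> P) \<and> l = (\<Sum>(\<eta>, m)\<in>F. c (\<eta>, m) * m))}"

definition Phi0 :: "('n::finite) rv set \<Rightarrow> nat \<Rightarrow> ('n rv \<Rightarrow> real) \<Rightarrow> 'n phib" where
  "Phi0 X k f = {(a, \<lambda>P. c * deltaf k a P, c * f a) | a c. a \<in> X}"

definition pnabla :: "('n::finite) rv set \<Rightarrow> nat \<Rightarrow> ('n rv \<Rightarrow> real) \<Rightarrow> 'n phib" where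
  "pnabla X k f = (rhoPhi X k ^^ (2 * (card (mi k :: ('n \<Rightarrow> nat) set) + 1))) (Phi0 X k f)"

definition nabla_is_fun :: "('n::finite) rv set \<Rightarrow> nat \<Rightarrow> ('n rv \<Rightarrow> real) \<Rightarrow> bool" where
  "nabla_is_fun X k f = (\<forall>a\<in>X. \<forall>\<xi>. (a, \<xi>) \<in> ptau X k \<longrightarrow> (\<exists>!l. (a, \<xi>, l) \<in> pnabla X k f))"

definition nabla_val :: "('n::finite) rv set \<Rightarrow> nat \<Rightarrow> ('n rv \<Rightarrow> real) \<Rightarrow> 'n rv
    \<Rightarrow> (('n rv \<Rightarrow> real) \<Rightarrow> real) \<Rightarrow> real" where
  "nabla_val X k f a \<xi> = (THE l. (a, \<xi>, l) \<in> pnabla X k f)"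

definition nabla_zero_at :: "('n::finite) rv set \<Rightarrow> nat \<Rightarrow> ('n rv \<Rightarrow> real) \<Rightarrow> 'n rv \<Rightarrow> bool" where
  "nabla_zero_at X k f a = (\<forall>\<xi>. (a, \<xi>) \<in> ptau X k \<longrightarrow> nabla_val X k f a \<xi> = 0)"

definition pdi :: "'n::finite \<Rightarrow> ('n rv \<Rightarrow> real) \<Rightarrow> ('n rv \<Rightarrow> real)" where
  "pdi i F = (\<lambda>x. frechet_derivative F (at x) (axis i 1))"

fun Cp :: "nat \<Rightarrow> (('n::finite) rv \<Rightarrow> real) \<Rightarrow> bool" where
  "Cp 0 F = continuous_on UNIV F"
| "Cp (Suc p) F = (F differentiable_on UNIV \<and> (\<forall>i. Cp p (pdi i F)))"

fun pdl :: "'n::finite list \<Rightarrow> ('n rv \<Rightarrow> real) \<Rightarrow> ('n rv \<Rightarrow> real)" where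
  "pdl [] F = F"
| "pdl (i # is) F = pdi i (pdl is F)"

definition pda :: "('n::finite \<Rightarrow> nat) \<Rightarrow> ('n rv \<Rightarrow> real) \<Rightarrow> ('n rv \<Rightarrow> real)" where
  "pda \<alpha> F = pdl (SOME l. \<forall>i. count_list l i = \<alpha> i) F"

definition pflat :: "nat \<Rightarrow> (('n::finite) rv \<Rightarrow> real) \<Rightarrow> 'n rv \<Rightarrow> bool" where
  "pflat p F a = (\<forall>l. length l \<le> p \<longrightarrow> pdl l F a = 0)"

definition taylor :: "nat \<Rightarrow> ('n::finite) rv \<Rightarrow> ('n rv \<Rightarrow> real) \<Rightarrow> ('n rv \<Rightarrow> real)" where
  "taylor p a F = (\<lambda>x. \<Sum>\<alpha>\<in>mi p. pda \<alpha> F a / afact \<alpha> * mono_at a \<alpha> x)"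

text \<open>iota_a(xi) = xi o pi_a, with pi_a the truncation P_q -> P_p at a (= T^p_a restricted to P_q)\<close>
definition iota :: "nat \<Rightarrow> nat \<Rightarrow> ('n::finite) rv \<Rightarrow> (('n rv \<Rightarrow> real) \<Rightarrow> real) \<Rightarrow> (('n rv \<Rightarrow> real) \<Rightarrow> real)" where
  "iota q p a \<xi> = (\<lambda>P. if P \<in> Pk q then \<xi> (taylor p a P) else 0)"

definition tau_p :: "('n::finite) rv set \<Rightarrow> nat \<Rightarrow> nat \<Rightarrow> 'n rv \<Rightarrow> (('n rv \<Rightarrow> real) \<Rightarrow> real) set" where
  "tau_p X q p a = {\<xi> \<in> dualk p. (a, iota q p a \<xi>) \<in> ptau X q}"

definition Tcal_p :: "('n::finite) rv set \<Rightarrow> nat \<Rightarrow> nat \<Rightarrow> 'n rv \<Rightarrow> (('n rv \<Rightarrow> real) \<Rightarrow> real) set" where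
  "Tcal_p X s p a = {\<xi> \<in> dualk p. \<forall>h. Cp s h \<and> (\<forall>x\<in>X. h x = 0) \<longrightarrow> \<xi> (taylor p a h) = 0}"

text \<open>R^N represented as functions nat => real vanishing from N on\<close>
definition Rsp :: "nat \<Rightarrow> (nat \<Rightarrow> real) set" where
  "Rsp N = {x. \<forall>i\<ge>N. x i = 0}"

definition edist :: "nat \<Rightarrow> (nat \<Rightarrow> real) \<Rightarrow> (nat \<Rightarrow> real) \<Rightarrow> real" where
  "edist N x y = sqrt (\<Sum>i<N. (x i - y i)^2)"

definition Ropen :: "nat \<Rightarrow> (nat \<Rightarrow> real) set \<Rightarrow> bool" where
  "Ropen N U = (U \<subseteq> Rsp N \<and> (\<forall>x\<in>U. \<exists>r>0. \<forall>y\<in>Rsp N. edist N x y < r \<longrightarrow> y \<in> U))"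

definition mindex :: "nat \<Rightarrow> (nat \<Rightarrow> nat) set" where
  "mindex N = {\<alpha>. \<forall>i\<ge>N. \<alpha> i = 0}"

definition Rmono :: "nat \<Rightarrow> (nat \<Rightarrow> real) \<Rightarrow> (nat \<Rightarrow> nat) \<Rightarrow> (nat \<Rightarrow> real) \<Rightarrow> real" where
  "Rmono N x \<alpha> y = (\<Prod>i<N. (y i - x i) ^ (\<alpha> i))"

definition Ranalytic :: "nat \<Rightarrow> (nat \<Rightarrow> real) set \<Rightarrow> ((nat \<Rightarrow> real) \<Rightarrow> real) \<Rightarrow> bool" where
  "Ranalytic N U f = (\<forall>x\<in>U. \<exists>r>0. \<exists>c. \<forall>y\<in>Rsp N. edist N x y < r \<longrightarrow>
      ((\<lambda>\<alpha>. c \<alpha> * Rmono N x \<alpha> y) has_sum f y) (mindex N))"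

definition semianalytic :: "nat \<Rightarrow> (nat \<Rightarrow> real) set \<Rightarrow> bool" where
  "semianalytic N A = (A \<subseteq> Rsp N \<and> (\<forall>x\<in>Rsp N. \<exists>U. Ropen N U \<and> x \<in> U \<and>
      (\<exists>(I::nat set) (J::nat set) f g. finite I \<and> finite J \<and>
         (\<forall>i\<in>I. Ranalytic N U (f i)) \<and> (\<forall>i\<in>I. \<forall>j\<in>J. Ranalytic N U (g i j)) \<and>
         A \<inter> U = (\<Union>i\<in>I. {y\<in>U. f i y = 0 \<and> (\<forall>j\<in>J. g i j y > 0)}))))"

definition idx :: "'n::finite \<Rightarrow> nat" where
  "idx = (SOME e. bij_betw e (UNIV :: 'n set) {..<CARD('n)})"

definition proj_n :: "(nat \<Rightarrow> real) \<Rightarrow> ('n::finite) rv" where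
  "proj_n y = (\<chi> i. y (idx i))"

definition subanalytic :: "('n::finite) rv set \<Rightarrow> bool" where
  "subanalytic X = (\<forall>x. \<exists>U. open U \<and> x \<in> U \<and> (\<exists>m A. semianalytic (CARD('n) + m) A
      \<and> (\<exists>B. \<forall>y\<in>A. \<forall>i. \<bar>y i\<bar> \<le> B) \<and> X \<inter> U = proj_n ` A))"

end

theory Submission
  imports Defs "HOL-Library.Function_Algebras"
begin


lemma finite_mi: "finite (mi k :: ('n::finite \<Rightarrow> nat) set)"
proof -
  have "mi k \<subseteq> PiE (UNIV::'n set) (\<lambda>_. {..k})"
  proof
    fix \<alpha> :: "'n \<Rightarrow> nat" assume "\<alpha> \<in> mi k"
    hence s: "sum \<alpha> UNIV \<le> k" by (simp add: mi_def)
    have "\<alpha> i \<le> k" for i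
      using member_le_sum[of i UNIV \<alpha>] s by auto
    thus "\<alpha> \<in> PiE UNIV (\<lambda>_. {..k})" by (auto simp: PiE_UNIV_domain)
  qed
  moreover have "finite (PiE (UNIV::'n set) (\<lambda>_. {..k}))"
    by (rule finite_PiE) auto
  ultimately show ?thesis by (rule finite_subset)
qed

lemma Pk_add: "P \<in> Pk k \<Longrightarrow> Q \<in> Pk k \<Longrightarrow> (\<lambda>x. P x + Q x) \<in> Pk k"
  unfolding Pk_def
proof clarify
  fix c d
  show "\<exists>e. (\<lambda>x. (\<Sum>\<alpha>\<in>mi k. c \<alpha> * mono_at 0 \<alpha> x) + (\<Sum>\<alpha>\<in>mi k. d \<alpha> * mono_at 0 \<alpha> x))
        = (\<lambda>x. \<Sum>\<alpha>\<in>mi k. e \<alpha> * mono_at 0 \<alpha> (x::'a rv))"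
    by (rule exI[of _ "\<lambda>\<alpha>. c \<alpha> + d \<alpha>"]) (simp add: sum.distrib ring_distribs)
qed

lemma Pk_scale: "P \<in> Pk k \<Longrightarrow> (\<lambda>x. c * P x) \<in> Pk k"
  unfolding Pk_def
proof clarify
  fix d
  show "\<exists>e. (\<lambda>x. c * (\<Sum>\<alpha>\<in>mi k. d \<alpha> * mono_at 0 \<alpha> x))
        = (\<lambda>x. \<Sum>\<alpha>\<in>mi k. e \<alpha> * mono_at 0 \<alpha> (x::'a rv))"
    by (rule exI[of _ "\<lambda>\<alpha>. c * d \<alpha>"]) (simp add: sum_distrib_left mult.assoc)
qed

lemma Pk_zero: "(\<lambda>x. 0) \<in> Pk k"
  unfolding Pk_def by (rule CollectI, rule exI[of _ "\<lambda>_. 0"]) simp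

lemma Pk_sum: "finite A \<Longrightarrow> (\<forall>j\<in>A. f j \<in> Pk k) \<Longrightarrow> (\<lambda>x. \<Sum>j\<in>A. f j x) \<in> Pk k"
proof (induction A rule: finite_induct)
  case empty thus ?case using Pk_zero by simp
next
  case (insert j A)
  thus ?case using Pk_add[of "f j" k "\<lambda>x. \<Sum>j\<in>A. f j x"] by simp
qed

lemma mono_in_Pk: "\<alpha> \<in> mi k \<Longrightarrow> mono_at 0 \<alpha> \<in> Pk k"
  unfolding Pk_def
proof (rule CollectI, rule exI[of _ "\<lambda>\<beta>. if \<beta> = \<alpha> then 1 else 0"])
  assume "\<alpha> \<in> mi k"
  show "mono_at 0 \<alpha> = (\<lambda>x. \<Sum>\<beta>\<in>mi k. (if \<beta> = \<alpha> then 1 else 0) * mono_at 0 \<beta> x)"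
  proof (rule ext)
    fix x
    have e: "(if \<beta> = \<alpha> then 1 else 0) * mono_at 0 \<beta> x = (if \<beta> = \<alpha> then mono_at 0 \<beta> x else 0)" for \<beta>
      by simp
    show "mono_at 0 \<alpha> x = (\<Sum>\<beta>\<in>mi k. (if \<beta> = \<alpha> then 1 else 0) * mono_at 0 \<beta> x)"
      unfolding e using finite_mi[of k] \<open>\<alpha> \<in> mi k\<close> by (subst sum.delta) (simp_all add: finite_mi)
  qed
qed

lemma mono_mult: "mono_at b \<alpha> x * mono_at b \<beta> x = mono_at b (\<lambda>i. \<alpha> i + \<beta> i) x"
  unfolding mono_at_def by (simp add: prod.distrib[symmetric] power_add)

lemma Pk_mult: "P \<in> Pk m \<Longrightarrow> Q \<in> Pk n \<Longrightarrow> (\<lambda>x. P x * Q x) \<in> Pk (m + n)"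
proof -
  assume "P \<in> Pk m" "Q \<in> Pk n"
  then obtain c d where P: "P = (\<lambda>x. \<Sum>\<alpha>\<in>mi m. c \<alpha> * mono_at 0 \<alpha> x)"
    and Q: "Q = (\<lambda>x. \<Sum>\<alpha>\<in>mi n. d \<alpha> * mono_at 0 \<alpha> x)" unfolding Pk_def by auto
  have eq: "(\<lambda>x. P x * Q x) = (\<lambda>x. \<Sum>\<alpha>\<in>mi m. \<Sum>\<beta>\<in>mi n. (c \<alpha> * d \<beta>) * mono_at 0 (\<lambda>i. \<alpha> i + \<beta> i) x)"
    unfolding P Q sum_product
    by (intro ext sum.cong refl) (simp add: mono_mult[symmetric] algebra_simps)
  have mem: "(\<lambda>i. \<alpha> i + \<beta> i) \<in> mi (m + n)" if "\<alpha> \<in> mi m" "\<beta> \<in> mi n" for \<alpha> \<beta> :: "'a \<Rightarrow> nat"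
    using that by (simp add: mi_def sum.distrib)
  show ?thesis unfolding eq
    by (intro Pk_sum finite_mi ballI Pk_scale mono_in_Pk mem)
qed

lemma mi_mono: "m \<le> n \<Longrightarrow> mi m \<subseteq> mi n"
  unfolding mi_def by auto

lemma Pk_mono: "m \<le> n \<Longrightarrow> P \<in> Pk m \<Longrightarrow> P \<in> Pk n"
proof -
  assume mn: "m \<le> n" and "P \<in> Pk m"
  then obtain c where P: "P = (\<lambda>x. \<Sum>\<alpha>\<in>mi m. c \<alpha> * mono_at 0 \<alpha> x)" unfolding Pk_def by auto
  show ?thesis unfolding P
    using mi_mono[OF mn] by (intro Pk_sum finite_mi ballI Pk_scale mono_in_Pk) auto
qed

lemma Pk_const: "(\<lambda>x::'n::finite rv. c) \<in> Pk k"
proof -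
  have "(\<lambda>_. 0::nat) \<in> (mi k :: ('n \<Rightarrow> nat) set)" by (simp add: mi_def)
  hence A: "(\<lambda>x::'n rv. c * mono_at 0 (\<lambda>_. 0) x) \<in> Pk k" by (intro Pk_scale mono_in_Pk)
  have B: "(\<lambda>x::'n rv. c * mono_at 0 (\<lambda>_. 0::nat) x) = (\<lambda>x::'n rv. c)" by (simp add: mono_at_def)
  show ?thesis using A unfolding B .
qed

lemma Pk_coord: "(\<lambda>x. x $ i) \<in> Pk 1"
proof -
  let ?e = "\<lambda>j. if j = i then 1 else (0::nat)"
  have "?e \<in> mi 1" by (simp add: mi_def)
  hence "mono_at 0 ?e \<in> Pk 1" by (rule mono_in_Pk)
  moreover have "mono_at 0 ?e = (\<lambda>x::'a rv. x $ i)"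
  proof
    fix x :: "'a rv"
    have "(\<Prod>j\<in>UNIV. (x $ j - 0 $ j) ^ ?e j) = (\<Prod>j\<in>UNIV. if j = i then x $ j else 1)"
      by (intro prod.cong) auto
    thus "mono_at 0 ?e x = x $ i" unfolding mono_at_def by simp
  qed
  ultimately show ?thesis by simp
qed

lemma Pk_prod: "finite I \<Longrightarrow> (\<forall>i\<in>I. f i \<in> Pk (d i)) \<Longrightarrow> (\<lambda>x. \<Prod>i\<in>I. f i x) \<in> Pk (\<Sum>i\<in>I. d i)"
proof (induction I rule: finite_induct)
  case empty thus ?case using Pk_const[of 1 0] by simp
next
  case (insert j I)
  thus ?case using Pk_mult[of "f j" "d j" "\<lambda>x. \<Prod>i\<in>I. f i x"] by simp
qed

lemma Pk_power: "f \<in> Pk d \<Longrightarrow> (\<lambda>x. f x ^ m) \<in> Pk (d * m)"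
proof (induction m)
  case 0 thus ?case using Pk_const[of 1 0] by simp
next
  case (Suc m) thus ?case using Pk_mult[of f d "\<lambda>x. f x ^ m" "d * m"] by (simp add: add.commute)
qed

lemma mono_at_Pk: "mono_at a \<alpha> \<in> Pk (mdeg \<alpha>)"
proof -
  have lin: "(\<lambda>x. x $ i - a $ i) \<in> Pk 1" for i
    using Pk_add[OF Pk_coord[of i] Pk_const[of "- a $ i" 1]] by simp
  have "(\<lambda>x. \<Prod>i\<in>UNIV. (x $ i - a $ i) ^ \<alpha> i) \<in> Pk (\<Sum>i\<in>UNIV. 1 * \<alpha> i)"
    by (intro Pk_prod finite ballI Pk_power lin)
  thus ?thesis by (simp add: mono_at_def[abs_def] mdeg_def)
qed

lemma taylor_Pk: "taylor p a G \<in> Pk p"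
  unfolding taylor_def
proof (intro Pk_sum finite_mi ballI)
  fix \<alpha> :: "'a \<Rightarrow> nat" assume "\<alpha> \<in> mi p"
  hence "mdeg \<alpha> \<le> p" by (simp add: mi_def mdeg_def)
  thus "(\<lambda>x. pda \<alpha> G a / afact \<alpha> * mono_at a \<alpha> x) \<in> Pk p"
    by (intro Pk_scale Pk_mono[OF _ mono_at_Pk])
qed



inductive_set polys :: "(('n::finite) rv \<Rightarrow> real) set" where
  pconst: "(\<lambda>x. c) \<in> polys"
| pcoord: "(\<lambda>x. x $ i) \<in> polys"
| padd: "f \<in> polys \<Longrightarrow> g \<in> polys \<Longrightarrow> (\<lambda>x. f x + g x) \<in> polys"
| pmult: "f \<in> polys \<Longrightarrow> g \<in> polys \<Longrightarrow> (\<lambda>x. f x * g x) \<in> polys"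

lemma fd_works: "f differentiable (at x) \<Longrightarrow> (f has_derivative frechet_derivative f (at x)) (at x)"
  using frechet_derivative_works by blast

lemma pdi_from_deriv: "(\<And>x. (F has_derivative D x) (at x)) \<Longrightarrow> pdi i F = (\<lambda>x. D x (axis i 1))"
proof (rule ext)
  fix x assume "\<And>x. (F has_derivative D x) (at x)"
  from frechet_derivative_at[OF this[of x]] show "pdi i F x = D x (axis i 1)"
    unfolding pdi_def by simp
qed

lemma polys_deriv: "f \<in> polys \<Longrightarrow> (\<forall>x. f differentiable (at x)) \<and> (\<forall>i. pdi i f \<in> polys)"
proof (induction f rule: polys.induct)
  case (pconst c)
  have d: "((\<lambda>x::'a rv. c) has_derivative (\<lambda>h. 0)) (at x)" for x by simp
  have "pdi i (\<lambda>x::'a rv. c) = (\<lambda>x. 0)" for i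
    using pdi_from_deriv[OF d] by (simp add: pdi_def)
  moreover have "(\<lambda>x::'a rv. c) differentiable (at x)" for x using d[of x] by (rule differentiableI)
  ultimately show ?case using polys.pconst[of 0] by auto
next
  case (pcoord j)
  have d: "((\<lambda>x::'a rv. x $ j) has_derivative (\<lambda>x. x $ j)) (at x)" for x
    by (rule bounded_linear_imp_has_derivative) auto
  have "pdi i (\<lambda>x::'a rv. x $ j) = (\<lambda>x. (axis i 1 :: 'a rv) $ j)" for i
    using pdi_from_deriv[OF d] by (simp add: pdi_def)
  moreover have "(\<lambda>x::'a rv. x $ j) differentiable (at x)" for x using d[of x] by (rule differentiableI)
  ultimately show ?case using polys.pconst by auto
next
  case (padd f g)
  have d: "((\<lambda>x. f x + g x) has_derivative (\<lambda>h. frechet_derivative f (at x) h + frechet_derivative g (at x) h)) (at x)" for x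
    using padd.IH by (intro has_derivative_add fd_works) auto
  have "pdi i (\<lambda>x. f x + g x) = (\<lambda>x. pdi i f x + pdi i g x)" for i
    using pdi_from_deriv[OF d] by (simp add: pdi_def)
  moreover have "(\<lambda>x. f x + g x) differentiable (at x)" for x using d[of x] by (rule differentiableI)
  moreover have "(\<lambda>x. pdi i f x + pdi i g x) \<in> polys" for i using padd.IH polys.padd by blast
  ultimately show ?case by auto
next
  case (pmult f g)
  have d: "((\<lambda>x. f x * g x) has_derivative (\<lambda>h. f x * frechet_derivative g (at x) h + frechet_derivative f (at x) h * g x)) (at x)" for x
    using pmult.IH by (intro has_derivative_mult fd_works) auto
  have "pdi i (\<lambda>x. f x * g x) = (\<lambda>x. f x * pdi i g x + pdi i f x * g x)" for i
    using pdi_from_deriv[OF d] by (simp add: pdi_def)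
  moreover have "(\<lambda>x. f x * pdi i g x + pdi i f x * g x) \<in> polys" for i
  proof -
    have "pdi i f \<in> polys" "pdi i g \<in> polys" using pmult.IH by auto
    thus ?thesis using polys.padd[OF polys.pmult[OF pmult.hyps(1)] polys.pmult[OF _ pmult.hyps(2)]] by blast
  qed
  moreover have "(\<lambda>x. f x * g x) differentiable (at x)" for x using d[of x] by (rule differentiableI)
  ultimately show ?case by auto
qed

lemma polys_sum: "finite A \<Longrightarrow> (\<forall>j\<in>A. f j \<in> polys) \<Longrightarrow> (\<lambda>x. \<Sum>j\<in>A. f j x) \<in> polys"
proof (induction A rule: finite_induct)
  case empty thus ?case using polys.pconst[of 0] by simp
next
  case (insert j A)
  thus ?case using polys.padd[of "f j" "\<lambda>x. \<Sum>j\<in>A. f j x"] by simp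
qed

lemma polys_prod: "finite A \<Longrightarrow> (\<forall>j\<in>A. f j \<in> polys) \<Longrightarrow> (\<lambda>x. \<Prod>j\<in>A. f j x) \<in> polys"
proof (induction A rule: finite_induct)
  case empty thus ?case using polys.pconst[of 1] by simp
next
  case (insert j A)
  thus ?case using polys.pmult[of "f j" "\<lambda>x. \<Prod>j\<in>A. f j x"] by simp
qed

lemma polys_power: "f \<in> polys \<Longrightarrow> (\<lambda>x. f x ^ m) \<in> polys"
proof (induction m)
  case 0 thus ?case using polys.pconst[of 1] by simp
next
  case (Suc m) thus ?case using polys.pmult[of f "\<lambda>x. f x ^ m"] by simp
qed

lemma Pk_polys: "(P::'n::finite rv \<Rightarrow> real) \<in> Pk k \<Longrightarrow> P \<in> polys"
proof -
  assume "P \<in> Pk k"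
  then obtain c where P: "P = (\<lambda>x. \<Sum>\<alpha>\<in>mi k. c \<alpha> * mono_at 0 \<alpha> x)" unfolding Pk_def by auto
  have m: "mono_at (0::'n rv) \<alpha> \<in> polys" for \<alpha>
  proof -
    have "mono_at 0 \<alpha> = (\<lambda>x::'n rv. \<Prod>i\<in>UNIV. (x $ i) ^ \<alpha> i)"
      by (simp add: mono_at_def[abs_def])
    moreover have "(\<lambda>x::'n rv. \<Prod>i\<in>UNIV. (x $ i) ^ \<alpha> i) \<in> polys"
      by (intro polys_prod polys_power ballI finite polys.pcoord)
    ultimately show ?thesis by simp
  qed
  show ?thesis unfolding P
    by (intro polys_sum finite_mi ballI polys.pmult polys.pconst m)
qed

lemma polys_Cp: "f \<in> polys \<Longrightarrow> Cp m f"
proof (induction m arbitrary: f)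
  case 0
  hence "f differentiable_on UNIV" using polys_deriv[of f] differentiable_at_imp_differentiable_on by blast
  thus ?case by (simp add: differentiable_imp_continuous_on)
next
  case (Suc m)
  have "f differentiable_on UNIV" using Suc.prems polys_deriv[of f] differentiable_at_imp_differentiable_on by blast
  moreover have "Cp m (pdi i f)" for i using Suc.prems polys_deriv[of f] Suc.IH by blast
  ultimately show ?case by simp
qed

lemma Pk_Cp: "P \<in> Pk k \<Longrightarrow> Cp m P"
  by (intro polys_Cp Pk_polys)

lemma Cp_pdl: "Cp m F \<Longrightarrow> length l \<le> m \<Longrightarrow> Cp (m - length l) (pdl l F)"
proof (induction l)
  case Nil thus ?case by simp
next
  case (Cons i l)
  have eq: "m - length l = Suc (m - length (i # l))" using Cons.prems(2) by simp
  have "Cp (m - length l) (pdl l F)" using Cons by simp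
  hence "Cp (Suc (m - length (i # l))) (pdl l F)" unfolding eq .
  thus ?case by simp
qed

lemma Cp_Suc_diff: "Cp (Suc m) F \<Longrightarrow> F differentiable (at x)"
proof -
  assume "Cp (Suc m) F"
  hence "F differentiable_on UNIV" by simp
  thus ?thesis unfolding differentiable_on_def by simp
qed

lemma pdi_lin:
  assumes "\<forall>x. F differentiable (at x)" "\<forall>x. G differentiable (at x)"
  shows "pdi i (\<lambda>x. c * F x + d * G x) = (\<lambda>x. c * pdi i F x + d * pdi i G x)"
proof -
  have der: "((\<lambda>x. c * F x + d * G x) has_derivative (\<lambda>h. c * frechet_derivative F (at x) h + d * frechet_derivative G (at x) h)) (at x)" for x
  proof -
    have a: "(F has_derivative frechet_derivative F (at x)) (at x)" using assms(1) fd_works by blast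
    have b: "(G has_derivative frechet_derivative G (at x)) (at x)" using assms(2) fd_works by blast
    show ?thesis by (rule has_derivative_add[OF has_derivative_mult_right[OF a] has_derivative_mult_right[OF b]])
  qed
  show ?thesis using pdi_from_deriv[OF der] by (simp add: pdi_def)
qed

lemma Cp_lin: "Cp m F \<Longrightarrow> Cp m G \<Longrightarrow> Cp m (\<lambda>x. c * F x + d * G x)"
proof (induction m arbitrary: F G)
  case 0
  hence "continuous_on UNIV F" "continuous_on UNIV G" by simp_all
  hence "continuous_on UNIV (\<lambda>x. c * F x + d * G x)"
    by (intro continuous_on_add continuous_on_mult continuous_on_const)
  thus ?case by simp
next
  case (Suc m)
  have dF: "\<forall>x. F differentiable (at x)" and dG: "\<forall>x. G differentiable (at x)"
    using Suc.prems Cp_Suc_diff by blast+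
  have "(\<lambda>x. c * F x + d * G x) differentiable (at x)" for x
    using dF dG by (intro differentiable_add differentiable_mult differentiable_const) auto
  hence "(\<lambda>x. c * F x + d * G x) differentiable_on UNIV"
    using differentiable_at_imp_differentiable_on by blast
  moreover have "Cp m (pdi i (\<lambda>x. c * F x + d * G x))" for i
  proof -
    have "Cp m (pdi i F)" "Cp m (pdi i G)" using Suc.prems by simp_all
    from Suc.IH[OF this] show ?thesis unfolding pdi_lin[OF dF dG] .
  qed
  ultimately show ?case by simp
qed

lemma pdl_lin: "Cp m F \<Longrightarrow> Cp m G \<Longrightarrow> length l \<le> m \<Longrightarrow>
   pdl l (\<lambda>x. c * F x + d * G x) = (\<lambda>x. c * pdl l F x + d * pdl l G x)"
proof (induction l)
  case Nil thus ?case by simp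
next
  case (Cons i l)
  have eq: "m - length l = Suc (m - length (i # l))" using Cons.prems(3) by simp
  have l: "length l \<le> m" using Cons.prems(3) by simp
  have "Cp (Suc (m - length (i # l))) (pdl l F)" "Cp (Suc (m - length (i # l))) (pdl l G)"
    using Cp_pdl[OF Cons.prems(1) l] Cp_pdl[OF Cons.prems(2) l] unfolding eq by auto
  hence "\<forall>x. pdl l F differentiable (at x)" "\<forall>x. pdl l G differentiable (at x)"
    using Cp_Suc_diff by blast+
  hence "pdi i (\<lambda>x. c * pdl l F x + d * pdl l G x) = (\<lambda>x. c * pdi i (pdl l F) x + d * pdi i (pdl l G) x)"
    by (rule pdi_lin)
  moreover have "pdl l (\<lambda>x. c * F x + d * G x) = (\<lambda>x. c * pdl l F x + d * pdl l G x)"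
    using Cons.IH[OF Cons.prems(1,2) l] .
  ultimately show ?case by simp
qed



lemma dual_add: "\<eta> \<in> dualk k \<Longrightarrow> P \<in> Pk k \<Longrightarrow> Q \<in> Pk k \<Longrightarrow> \<eta> (\<lambda>x. P x + Q x) = \<eta> P + \<eta> Q"
  unfolding dualk_def by blast

lemma dual_scale: "\<eta> \<in> dualk k \<Longrightarrow> P \<in> Pk k \<Longrightarrow> \<eta> (\<lambda>x. c * P x) = c * \<eta> P"
  unfolding dualk_def by blast

lemma dual_out: "\<eta> \<in> dualk k \<Longrightarrow> P \<notin> Pk k \<Longrightarrow> \<eta> P = 0"
  unfolding dualk_def by blast

lemma dual_zero: "\<eta> \<in> dualk k \<Longrightarrow> \<eta> (\<lambda>x. 0) = 0"
  using dual_scale[OF _ Pk_zero, of \<eta> k 0] by simp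

lemma dual_sum_gen: "finite A \<Longrightarrow> A \<subseteq> mi k \<Longrightarrow> \<eta> \<in> dualk k \<Longrightarrow>
  \<eta> (\<lambda>x. \<Sum>\<alpha>\<in>A. c \<alpha> * mono_at 0 \<alpha> x) = (\<Sum>\<alpha>\<in>A. c \<alpha> * \<eta> (mono_at 0 \<alpha>))"
proof (induction A rule: finite_induct)
  case empty thus ?case using dual_zero by simp
next
  case (insert \<beta> A)
  have m: "mono_at 0 \<beta> \<in> Pk k" using insert.prems by (intro mono_in_Pk) auto
  have s: "(\<lambda>x. \<Sum>\<alpha>\<in>A. c \<alpha> * mono_at 0 \<alpha> x) \<in> Pk k"
    using insert by (intro Pk_sum ballI Pk_scale mono_in_Pk) auto
  have "\<eta> (\<lambda>x. \<Sum>\<alpha>\<in>insert \<beta> A. c \<alpha> * mono_at 0 \<alpha> x)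
      = \<eta> (\<lambda>x. c \<beta> * mono_at 0 \<beta> x + (\<Sum>\<alpha>\<in>A. c \<alpha> * mono_at 0 \<alpha> x))"
    using insert by simp
  also have "\<dots> = \<eta> (\<lambda>x. c \<beta> * mono_at 0 \<beta> x) + \<eta> (\<lambda>x. \<Sum>\<alpha>\<in>A. c \<alpha> * mono_at 0 \<alpha> x)"
    by (rule dual_add[OF insert.prems(2) Pk_scale[OF m] s])
  also have "\<dots> = c \<beta> * \<eta> (mono_at 0 \<beta>) + (\<Sum>\<alpha>\<in>A. c \<alpha> * \<eta> (mono_at 0 \<alpha>))"
    using dual_scale[OF insert.prems(2) m] insert by simp
  finally show ?case using insert by simp
qed

lemma dual_eval: "\<eta> \<in> dualk k \<Longrightarrow>
  \<eta> (\<lambda>x. \<Sum>\<alpha>\<in>mi k. c \<alpha> * mono_at 0 \<alpha> x) = (\<Sum>\<alpha>\<in>mi k. c \<alpha> * \<eta> (mono_at 0 \<alpha>))"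
  by (rule dual_sum_gen[OF finite_mi order_refl])

lemma dual_ext: "\<eta> \<in> dualk k \<Longrightarrow> \<eta>' \<in> dualk k \<Longrightarrow> (\<forall>\<alpha>\<in>mi k. \<eta> (mono_at 0 \<alpha>) = \<eta>' (mono_at 0 \<alpha>)) \<Longrightarrow> \<eta> = \<eta>'"
proof (rule ext)
  fix P
  assume h: "\<eta> \<in> dualk k" "\<eta>' \<in> dualk k" "\<forall>\<alpha>\<in>mi k. \<eta> (mono_at 0 \<alpha>) = \<eta>' (mono_at 0 \<alpha>)"
  show "\<eta> P = \<eta>' P"
  proof (cases "P \<in> Pk k")
    case True
    then obtain c where P: "P = (\<lambda>x. \<Sum>\<alpha>\<in>mi k. c \<alpha> * mono_at 0 \<alpha> x)" unfolding Pk_def by auto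
    show ?thesis unfolding P dual_eval[OF h(1)] dual_eval[OF h(2)] using h(3) by simp
  next
    case False thus ?thesis using h dual_out by metis
  qed
qed

lemma dual_bound:
  fixes \<eta> \<eta>' :: "(('n::finite) rv \<Rightarrow> real) \<Rightarrow> real"
  assumes "\<eta> \<in> dualk k" "\<eta>' \<in> dualk k" "P = (\<lambda>x. \<Sum>\<alpha>\<in>mi k. c \<alpha> * mono_at 0 \<alpha> x)"
  shows "\<bar>\<eta> P - \<eta>' P\<bar> \<le> (\<Sum>\<alpha>\<in>mi k. \<bar>c \<alpha>\<bar>) * ddist k \<eta> \<eta>'"
proof -
  have "\<eta> P - \<eta>' P = (\<Sum>\<alpha>\<in>mi k. c \<alpha> * (\<eta> (mono_at 0 \<alpha>) - \<eta>' (mono_at 0 \<alpha>)))"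
    unfolding assms(3) dual_eval[OF assms(1)] dual_eval[OF assms(2)]
    by (simp add: sum_subtractf right_diff_distrib)
  hence "\<bar>\<eta> P - \<eta>' P\<bar> \<le> (\<Sum>\<alpha>\<in>mi k. \<bar>c \<alpha>\<bar> * \<bar>\<eta> (mono_at 0 \<alpha>) - \<eta>' (mono_at 0 \<alpha>)\<bar>)"
    using sum_abs[of "\<lambda>\<alpha>::'n \<Rightarrow> nat. c \<alpha> * (\<eta> (mono_at 0 \<alpha>) - \<eta>' (mono_at 0 \<alpha>))" "mi k"]
    by (simp add: abs_mult)
  also have "\<dots> \<le> (\<Sum>\<alpha>\<in>mi k. \<bar>c \<alpha>\<bar> * ddist k \<eta> \<eta>')"
  proof (rule sum_mono)
    fix \<alpha> :: "'n \<Rightarrow> nat" assume a: "\<alpha> \<in> mi k"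
    have "\<bar>\<eta> (mono_at 0 \<alpha>) - \<eta>' (mono_at 0 \<alpha>)\<bar> \<le> ddist k \<eta> \<eta>'"
      unfolding ddist_def
      using member_le_sum[OF a, of "\<lambda>\<alpha>. \<bar>\<eta> (mono_at 0 \<alpha>) - \<eta>' (mono_at 0 \<alpha>)\<bar>"] finite_mi by auto
    thus "\<bar>c \<alpha>\<bar> * \<bar>\<eta> (mono_at 0 \<alpha>) - \<eta>' (mono_at 0 \<alpha>)\<bar> \<le> \<bar>c \<alpha>\<bar> * ddist k \<eta> \<eta>'"
      by (simp add: mult_left_mono)
  qed
  also have "\<dots> = (\<Sum>\<alpha>\<in>mi k. \<bar>c \<alpha>\<bar>) * ddist k \<eta> \<eta>'" by (simp add: sum_distrib_right)
  finally show ?thesis .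
qed

lemma dualk_add: "\<eta>1 \<in> dualk k \<Longrightarrow> \<eta>2 \<in> dualk k \<Longrightarrow> (\<lambda>P. \<eta>1 P + \<eta>2 P) \<in> dualk k"
  unfolding dualk_def by (auto simp: algebra_simps)

lemma dualk_scale: "\<eta> \<in> dualk k \<Longrightarrow> (\<lambda>P. c * \<eta> P) \<in> dualk k"
  unfolding dualk_def by (auto simp: algebra_simps)

lemma dualk_zero: "(\<lambda>P. 0) \<in> dualk k"
  unfolding dualk_def by auto

lemma dualk_sum: "finite F \<Longrightarrow> F \<subseteq> dualk k \<Longrightarrow> (\<lambda>P. \<Sum>\<eta>\<in>F. c \<eta> * \<eta> P) \<in> dualk k"
proof (induction F rule: finite_induct)
  case empty thus ?case using dualk_zero by simp
next
  case (insert \<eta> F)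
  hence "(\<lambda>P. c \<eta> * \<eta> P + (\<Sum>\<eta>\<in>F. c \<eta> * \<eta> P)) \<in> dualk k"
    by (intro dualk_add dualk_scale) auto
  thus ?case using insert by simp
qed

lemma fspan_dualk: "S \<subseteq> dualk k \<Longrightarrow> fspan S \<subseteq> dualk k"
  unfolding fspan_def using dualk_sum by blast

lemma deltaf_dualk: "deltaf k (a::'n::finite rv) \<in> dualk k"
  unfolding dualk_def deltaf_def
proof (rule CollectI, intro conjI ballI allI impI)
  fix P Q :: "'n rv \<Rightarrow> real" assume "P \<in> Pk k" "Q \<in> Pk k"
  thus "(if (\<lambda>x. P x + Q x) \<in> Pk k then P a + Q a else 0) = (if P \<in> Pk k then P a else 0) + (if Q \<in> Pk k then Q a else 0)"
    using Pk_add[of P k Q] by simp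
next
  fix P :: "'n rv \<Rightarrow> real" and c assume "P \<in> Pk k"
  thus "(if (\<lambda>x. c * P x) \<in> Pk k then c * P a else 0) = c * (if P \<in> Pk k then P a else 0)"
    using Pk_scale[of P k c] by simp
qed simp

lemma pda_lin: "(\<forall>m. Cp m F) \<Longrightarrow> (\<forall>m. Cp m G) \<Longrightarrow>
  pda \<alpha> (\<lambda>x. c * F x + d * G x) = (\<lambda>x. c * pda \<alpha> F x + d * pda \<alpha> G x)"
  unfolding pda_def by (rule pdl_lin) auto

lemma taylor_lin: "(\<forall>m. Cp m F) \<Longrightarrow> (\<forall>m. Cp m G) \<Longrightarrow>
  taylor p a (\<lambda>x. c * F x + d * G x) = (\<lambda>x. c * taylor p a F x + d * taylor p a G x)"
  unfolding taylor_def pda_lin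
  by (simp add: sum.distrib sum_distrib_left algebra_simps add_divide_distrib)

lemma iota_dualk:
  assumes xi: "\<xi> \<in> dualk p"
  shows "iota q p a \<xi> \<in> dualk q"
proof -
  have add: "iota q p a \<xi> (\<lambda>x. P x + Q x) = iota q p a \<xi> P + iota q p a \<xi> Q"
    if P: "P \<in> Pk q" and Q: "Q \<in> Pk q" for P Q
  proof -
    have cP: "\<forall>m. Cp m P" and cQ: "\<forall>m. Cp m Q" using P Q Pk_Cp by blast+
    have "taylor p a (\<lambda>x. 1 * P x + 1 * Q x) = (\<lambda>x. 1 * taylor p a P x + 1 * taylor p a Q x)"
      by (rule taylor_lin[OF cP cQ])
    hence t: "taylor p a (\<lambda>x. P x + Q x) = (\<lambda>x. taylor p a P x + taylor p a Q x)" by simp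
    show ?thesis unfolding iota_def using P Q Pk_add[OF P Q]
      by (simp add: t dual_add[OF xi taylor_Pk taylor_Pk])
  qed
  have scale: "iota q p a \<xi> (\<lambda>x. c * P x) = c * iota q p a \<xi> P" if P: "P \<in> Pk q" for P c
  proof -
    have cP: "\<forall>m. Cp m P" using P Pk_Cp by blast
    have "taylor p a (\<lambda>x. c * P x + 0 * P x) = (\<lambda>x. c * taylor p a P x + 0 * taylor p a P x)"
      by (rule taylor_lin[OF cP cP])
    hence t: "taylor p a (\<lambda>x. c * P x) = (\<lambda>x. c * taylor p a P x)" by simp
    show ?thesis unfolding iota_def using P Pk_scale[OF P]
      by (simp add: t dual_scale[OF xi taylor_Pk])
  qed
  show ?thesis unfolding dualk_def using add scale by (auto simp: iota_def)
qed

lemma count_replicate: "count_list (replicate n x) y = (if x = y then n else 0)"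
  by (induction n) auto

lemma count_concat_rep: "distinct xs \<Longrightarrow>
  count_list (concat (map (\<lambda>i. replicate (\<alpha> i) i) xs)) j = (if j \<in> set xs then \<alpha> j else 0)"
  by (induction xs) (auto simp: count_replicate)

lemma count_list_exists: "\<exists>l. \<forall>i::'n::finite. count_list l i = \<alpha> i"
proof -
  obtain xs where xs: "set xs = (UNIV::'n set)" "distinct xs" using finite_distinct_list[of "UNIV::'n set"] by auto
  show ?thesis
    by (rule exI[of _ "concat (map (\<lambda>i. replicate (\<alpha> i) i) xs)"]) (simp add: count_concat_rep xs)
qed

lemma length_count: "(\<forall>i::'n::finite. count_list l i = \<alpha> i) \<Longrightarrow> length l = mdeg \<alpha>"
  using sum_count_set[of l "UNIV::'n set"] unfolding mdeg_def by simp

lemma pda_pdl: "\<exists>l. pda \<alpha> F = pdl l F \<and> length l = mdeg \<alpha>"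
proof -
  let ?l = "SOME l. \<forall>i. count_list l i = \<alpha> i"
  have "\<forall>i. count_list ?l i = \<alpha> i" using someI_ex[OF count_list_exists[of \<alpha>]] .
  thus ?thesis unfolding pda_def using length_count by blast
qed



definition sc :: "real \<Rightarrow> ('a \<Rightarrow> real) \<Rightarrow> ('a \<Rightarrow> real)" where
  "sc c u = (\<lambda>b. c * u b)"

lemma vs_sc: "vector_space (sc :: real \<Rightarrow> ('a \<Rightarrow> real) \<Rightarrow> _)"
  by unfold_locales (auto simp: sc_def plus_fun_def algebra_simps)

lemma mod_sc: "module (sc :: real \<Rightarrow> ('a \<Rightarrow> real) \<Rightarrow> _)"
  using vs_sc module_iff_vector_space by blast

lemma vs_mult: "vector_space ((*) :: real \<Rightarrow> real \<Rightarrow> real)"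
  by unfold_locales (auto simp: algebra_simps)

lemma vsp: "vector_space_pair (sc :: real \<Rightarrow> ('a \<Rightarrow> real) \<Rightarrow> _) ((*) :: real \<Rightarrow> real \<Rightarrow> real)"
  using vs_sc vs_mult by (simp add: vector_space_pair_def)

definition Phi :: "nat \<Rightarrow> ((('n::finite) rv \<Rightarrow> real) \<Rightarrow> real) \<Rightarrow> (('n \<Rightarrow> nat) \<Rightarrow> real)" where
  "Phi k \<eta> = (\<lambda>\<alpha>. if \<alpha> \<in> mi k then \<eta> (mono_at 0 \<alpha>) else 0)"

lemma fsum_apply: "(\<Sum>a\<in>A. (f a :: 'b \<Rightarrow> real)) x = (\<Sum>a\<in>A. f a x)"
proof (induction A rule: infinite_finite_induct)
  case (infinite A) thus ?case by (simp add: zero_fun_def)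
next
  case empty thus ?case by (simp add: zero_fun_def)
next
  case (insert a A) thus ?case by (simp add: plus_fun_def)
qed

lemma fspan_zero: "(\<lambda>P. 0) \<in> fspan S"
  unfolding fspan_def by (rule CollectI, rule exI[of _ "{}"]) auto

lemma fspan_base: "\<eta> \<in> S \<Longrightarrow> \<eta> \<in> fspan S"
  unfolding fspan_def by (rule CollectI, rule exI[of _ "{\<eta>}"], rule exI[of _ "\<lambda>_. 1"]) auto

lemma fspan_scale: "\<eta> \<in> fspan S \<Longrightarrow> (\<lambda>P. c * \<eta> P) \<in> fspan S"
  unfolding fspan_def
proof clarify
  fix F d assume F: "finite F" "F \<subseteq> S"
  show "\<exists>F' e. finite F' \<and> F' \<subseteq> S \<and> (\<lambda>P. c * (\<Sum>\<eta>\<in>F. d \<eta> * \<eta> P)) = (\<lambda>P. \<Sum>\<eta>\<in>F'. e \<eta> * \<eta> P)"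
    using F by (intro exI[of _ F] exI[of _ "\<lambda>\<eta>. c * d \<eta>"]) (auto simp: sum_distrib_left mult.assoc)
qed

lemma fspan_add: "\<eta>1 \<in> fspan S \<Longrightarrow> \<eta>2 \<in> fspan S \<Longrightarrow> (\<lambda>P. \<eta>1 P + \<eta>2 P) \<in> fspan S"
  unfolding fspan_def
proof clarify
  fix F1 d1 F2 d2 assume F: "finite F1" "F1 \<subseteq> S" "finite F2" "F2 \<subseteq> S"
  let ?e = "\<lambda>\<eta>. (if \<eta> \<in> F1 then d1 \<eta> else (0::real)) + (if \<eta> \<in> F2 then d2 \<eta> else 0)"
  have "(\<Sum>\<eta>\<in>F1 \<union> F2. ?e \<eta> * \<eta> P) = (\<Sum>\<eta>\<in>F1. d1 \<eta> * \<eta> P) + (\<Sum>\<eta>\<in>F2. d2 \<eta> * \<eta> P)" for P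
  proof -
    have "(\<Sum>\<eta>\<in>F1 \<union> F2. ?e \<eta> * \<eta> P) = (\<Sum>\<eta>\<in>F1 \<union> F2. (if \<eta> \<in> F1 then d1 \<eta> * \<eta> P else 0))
       + (\<Sum>\<eta>\<in>F1 \<union> F2. (if \<eta> \<in> F2 then d2 \<eta> * \<eta> P else 0))"
    proof -
      have "(\<Sum>\<eta>\<in>F1 \<union> F2. ?e \<eta> * \<eta> P) = (\<Sum>\<eta>\<in>F1 \<union> F2. (if \<eta> \<in> F1 then d1 \<eta> * \<eta> P else 0) + (if \<eta> \<in> F2 then d2 \<eta> * \<eta> P else 0))"
        by (intro sum.cong refl) (simp add: ring_distribs)
      thus ?thesis by (simp only: sum.distrib)
    qed
    also have "\<dots> = (\<Sum>\<eta>\<in>F1. d1 \<eta> * \<eta> P) + (\<Sum>\<eta>\<in>F2. d2 \<eta> * \<eta> P)"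
      using F by (simp add: sum.inter_restrict[symmetric] Int_absorb1 Int_absorb2 Int_commute)
    finally show ?thesis .
  qed
  thus "\<exists>F' e. finite F' \<and> F' \<subseteq> S \<and> (\<lambda>P. (\<Sum>\<eta>\<in>F1. d1 \<eta> * \<eta> P) + (\<Sum>\<eta>\<in>F2. d2 \<eta> * \<eta> P)) = (\<lambda>P. \<Sum>\<eta>\<in>F'. e \<eta> * \<eta> P)"
    using F by (intro exI[of _ "F1 \<union> F2"] exI[of _ ?e]) auto
qed

lemma Phi_add: "Phi k (\<lambda>P. \<eta>1 P + \<eta>2 P) = Phi k \<eta>1 + Phi k \<eta>2"
  by (auto simp: Phi_def plus_fun_def)

lemma Phi_scale: "Phi k (\<lambda>P. c * \<eta> P) = sc c (Phi k \<eta>)"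
  by (auto simp: Phi_def sc_def)

lemma Phi_zero: "Phi k (\<lambda>P. 0) = 0"
  by (auto simp: Phi_def zero_fun_def)

lemma separation:
  fixes S :: "((('n::finite) rv \<Rightarrow> real) \<Rightarrow> real) set"
  assumes S: "S \<subseteq> dualk k" and z: "\<zeta> \<in> dualk k" and nz: "\<zeta> \<notin> fspan S"
  shows "\<exists>P \<in> Pk k. (\<forall>\<eta>\<in>S. \<eta> P = 0) \<and> \<zeta> P \<noteq> 0"
proof -
  let ?V = "{u. \<exists>\<eta>\<in>fspan S. u = Phi k \<eta>}"
  have sub: "module.subspace sc ?V"
  proof (rule module.subspaceI[OF mod_sc])
    show "0 \<in> ?V" using fspan_zero Phi_zero by (metis (mono_tags, lifting) mem_Collect_eq)
  next
    fix x y assume "x \<in> ?V" "y \<in> ?V"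
    then obtain \<eta>1 \<eta>2 where "\<eta>1 \<in> fspan S" "\<eta>2 \<in> fspan S" "x = Phi k \<eta>1" "y = Phi k \<eta>2" by auto
    thus "x + y \<in> ?V" using fspan_add Phi_add by (metis (mono_tags, lifting) mem_Collect_eq)
  next
    fix c x assume "x \<in> ?V"
    then obtain \<eta> where "\<eta> \<in> fspan S" "x = Phi k \<eta>" by auto
    thus "sc c x \<in> ?V" using fspan_scale Phi_scale by (metis (mono_tags, lifting) mem_Collect_eq)
  qed
  have PS: "Phi k ` S \<subseteq> ?V" using fspan_base by blast
  have spanV: "module.span sc (Phi k ` S) \<subseteq> ?V"
    by (rule module.span_minimal[OF mod_sc PS sub])
  have notV: "Phi k \<zeta> \<notin> ?V"
  proof
    assume "Phi k \<zeta> \<in> ?V"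
    then obtain \<eta> where e: "\<eta> \<in> fspan S" "Phi k \<zeta> = Phi k \<eta>" by auto
    have "\<eta> \<in> dualk k" using fspan_dualk[OF S] e(1) by blast
    moreover have "\<forall>\<alpha>\<in>mi k. \<zeta> (mono_at 0 \<alpha>) = \<eta> (mono_at 0 \<alpha>)"
    proof
      fix \<alpha> :: "'n \<Rightarrow> nat" assume "\<alpha> \<in> mi k"
      thus "\<zeta> (mono_at 0 \<alpha>) = \<eta> (mono_at 0 \<alpha>)" using fun_cong[OF e(2), of \<alpha>] by (simp add: Phi_def)
    qed
    ultimately have "\<zeta> = \<eta>" using dual_ext[OF z] by blast
    thus False using e(1) nz by simp
  qed
  obtain B where B: "B \<subseteq> Phi k ` S" "\<not> module.dependent sc B" "Phi k ` S \<subseteq> module.span sc B"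
    using vector_space.maximal_independent_subset[OF vs_sc, of "Phi k ` S"] by blast
  have spanB: "module.span sc B \<subseteq> module.span sc (Phi k ` S)"
    by (rule module.span_mono[OF mod_sc B(1)])
  have notB: "Phi k \<zeta> \<notin> module.span sc B" using spanB spanV notV by blast
  have notB': "Phi k \<zeta> \<notin> B" using notB module.span_base[OF mod_sc] by blast
  have ind: "\<not> module.dependent sc (insert (Phi k \<zeta>) B)"
    using vector_space.independent_insert[OF vs_sc, of "Phi k \<zeta>" B] B(2) notB notB' by metis
  obtain g where g: "Vector_Spaces.linear sc (*) g" "\<forall>x\<in>insert (Phi k \<zeta>) B. g x = (if x = Phi k \<zeta> then 1 else 0)"
    using vector_space_pair.linear_independent_extend[OF vsp ind, of "\<lambda>x. if x = Phi k \<zeta> then 1 else 0"] by blast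
  have gadd: "g (x + y) = g x + g y" and gsc: "g (sc c x) = c * g x" for x y c
    using g(1) unfolding Vector_Spaces.linear_iff by auto
  have g0: "g 0 = 0" using gsc[of 0 0] by (simp add: sc_def zero_fun_def)
  have kerSub: "module.subspace sc {u. g u = 0}"
    by (rule module.subspaceI[OF mod_sc]) (auto simp: g0 gadd gsc)
  have "B \<subseteq> {u. g u = 0}" using g(2) notB' by auto
  hence "module.span sc B \<subseteq> {u. g u = 0}" by (rule module.span_minimal[OF mod_sc _ kerSub])
  hence gS: "\<forall>\<eta>\<in>S. g (Phi k \<eta>) = 0" using B(3) by blast
  have gz: "g (Phi k \<zeta>) = 1" using g(2) by simp
  define e where "e = (\<lambda>\<alpha>::'n \<Rightarrow> nat. (\<lambda>\<beta>::'n \<Rightarrow> nat. if \<beta> = \<alpha> then 1 else (0::real)))"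
  define c where "c = (\<lambda>\<alpha>. g (e \<alpha>))"
  define P where "P = (\<lambda>x::'n rv. \<Sum>\<alpha>\<in>mi k. c \<alpha> * mono_at 0 \<alpha> x)"
  have gsum: "g (\<Sum>\<alpha>\<in>A. sc (u \<alpha>) (e \<alpha>)) = (\<Sum>\<alpha>\<in>A. u \<alpha> * c \<alpha>)" if "finite A" for A u
    using that
  proof (induction A rule: finite_induct)
    case empty show ?case by (simp only: sum.empty g0)
  next
    case (insert a A)
    have "g (\<Sum>\<alpha>\<in>insert a A. sc (u \<alpha>) (e \<alpha>)) = g (sc (u a) (e a) + (\<Sum>\<alpha>\<in>A. sc (u \<alpha>) (e \<alpha>)))"
      using sum.insert[OF insert.hyps, of "\<lambda>\<alpha>. sc (u \<alpha>) (e \<alpha>)"] by (rule arg_cong)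
    also have "\<dots> = u a * c a + (\<Sum>\<alpha>\<in>A. u \<alpha> * c \<alpha>)"
      by (simp only: gadd gsc insert.IH c_def)
    also have "\<dots> = (\<Sum>\<alpha>\<in>insert a A. u \<alpha> * c \<alpha>)"
      using sum.insert[OF insert.hyps, of "\<lambda>\<alpha>. u \<alpha> * c \<alpha>"] by simp
    finally show ?case .
  qed
  have decomp: "Phi k \<eta> = (\<Sum>\<alpha>\<in>mi k. sc (Phi k \<eta> \<alpha>) (e \<alpha>))" for \<eta>
  proof (rule ext)
    fix \<beta>
    have "(\<Sum>\<alpha>\<in>mi k. sc (Phi k \<eta> \<alpha>) (e \<alpha>)) \<beta> = (\<Sum>\<alpha>\<in>mi k. Phi k \<eta> \<alpha> * e \<alpha> \<beta>)"
      by (simp add: fsum_apply sc_def)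
    also have "\<dots> = (\<Sum>\<alpha>\<in>mi k. if \<alpha> = \<beta> then Phi k \<eta> \<alpha> else 0)"
      by (intro sum.cong) (auto simp: e_def)
    also have "\<dots> = Phi k \<eta> \<beta>" by (subst sum.delta) (simp_all add: finite_mi Phi_def)
    finally show "Phi k \<eta> \<beta> = (\<Sum>\<alpha>\<in>mi k. sc (Phi k \<eta> \<alpha>) (e \<alpha>)) \<beta>" by simp
  qed
  have evalP: "\<eta> P = g (Phi k \<eta>)" if "\<eta> \<in> dualk k" for \<eta>
  proof -
    have "\<eta> P = (\<Sum>\<alpha>\<in>mi k. c \<alpha> * \<eta> (mono_at 0 \<alpha>))" unfolding P_def by (rule dual_eval[OF that])
    also have "\<dots> = (\<Sum>\<alpha>\<in>mi k. Phi k \<eta> \<alpha> * c \<alpha>)" by (intro sum.cong) (auto simp: Phi_def)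
    also have "\<dots> = g (\<Sum>\<alpha>\<in>mi k. sc (Phi k \<eta> \<alpha>) (e \<alpha>))" using gsum[OF finite_mi[of k], of "Phi k \<eta>"] by (rule sym)
    also have "\<dots> = g (Phi k \<eta>)" using arg_cong[OF decomp[of \<eta>], of g] by (rule sym)
    finally show ?thesis .
  qed
  have "P \<in> Pk k" unfolding P_def Pk_def by (rule CollectI, rule exI[of _ c], rule refl)
  moreover have "\<forall>\<eta>\<in>S. \<eta> P = 0"
  proof
    fix \<eta> assume "\<eta> \<in> S"
    thus "\<eta> P = 0" using evalP[of \<eta>] gS S by auto
  qed
  moreover have "\<zeta> P \<noteq> 0" using evalP[OF z] gz by simp
  ultimately show ?thesis by blast
qed



definition Inv :: "('n::finite) rv set \<Rightarrow> nat \<Rightarrow> ('n rv \<times> (('n rv \<Rightarrow> real) \<Rightarrow> real)) set \<Rightarrow> bool" where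
  "Inv X k E = (\<forall>a \<xi>. (a, \<xi>) \<in> E \<longrightarrow> a \<in> X \<and> \<xi> \<in> dualk k)"

definition Gr :: "(('n::finite) rv \<Rightarrow> real) \<Rightarrow> ('n rv \<times> (('n rv \<Rightarrow> real) \<Rightarrow> real)) set \<Rightarrow> 'n phib" where
  "Gr P E = {(a, \<xi>, l). (a, \<xi>) \<in> E \<and> l = \<xi> P}"

lemma Phi0_Gr: "P \<in> Pk k \<Longrightarrow> Phi0 X k P = Gr P (E0 X k)"
  unfolding Phi0_def Gr_def E0_def deltaf_def by auto

lemma DeltaPhi_Gr: "DeltaPhi X k (Gr P E) = {(a, b, \<zeta>, \<nu>). (a, b, \<zeta>) \<in> DeltaE X k E \<and> \<nu> = \<zeta> P}"
  unfolding DeltaPhi_def DeltaE_def Gr_def by auto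

lemma DeltaE_dualk: "Inv X k E \<Longrightarrow> (a, b, \<zeta>) \<in> DeltaE X k E \<Longrightarrow> \<zeta> \<in> dualk k"
  unfolding DeltaE_def Inv_def using dualk_add by blast

lemma small_zero: "(\<And>\<delta>. \<delta> > 0 \<Longrightarrow> \<bar>x::real\<bar> < \<delta>) \<Longrightarrow> x = 0"
proof (rule ccontr)
  assume h: "\<And>\<delta>. \<delta> > 0 \<Longrightarrow> \<bar>x::real\<bar> < \<delta>" and "x \<noteq> 0"
  hence "\<bar>x\<bar> > 0" by simp
  from h[OF this] show False by simp
qed

lemma Phiprime_Gr:
  assumes inv: "Inv X k E" and P: "P \<in> Pk k"
  shows "Phiprime X k (Gr P E) = Gr P (Eprime X k E)"
proof -
  obtain c where Pc: "P = (\<lambda>x. \<Sum>\<alpha>\<in>mi k. c \<alpha> * mono_at 0 \<alpha> x)" using P unfolding Pk_def by auto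
  define C where "C = (\<Sum>\<alpha>\<in>mi k. \<bar>c \<alpha>\<bar>)"
  have C0: "C \<ge> 0" unfolding C_def by (simp add: sum_nonneg)
  have bnd: "\<bar>\<eta> P - \<eta>' P\<bar> \<le> C * ddist k \<eta> \<eta>'" if "\<eta> \<in> dualk k" "\<eta>' \<in> dualk k" for \<eta> \<eta>'
    unfolding C_def by (rule dual_bound[OF that Pc])
  show ?thesis
  proof (rule set_eqI, clarify)
    fix a \<xi> l
    show "((a, \<xi>, l) \<in> Phiprime X k (Gr P E)) = ((a, \<xi>, l) \<in> Gr P (Eprime X k E))"
    proof
      assume h: "(a, \<xi>, l) \<in> Phiprime X k (Gr P E)"
      hence aX: "a \<in> X" and xi: "\<xi> \<in> dualk k" and
        cl: "\<forall>\<epsilon>>0. \<exists>a1 b1 \<xi>1 l1. (a1, b1, \<xi>1) \<in> DeltaE X k E \<and> l1 = \<xi>1 P \<and> dist a1 a < \<epsilon> \<and> dist b1 a < \<epsilon>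
            \<and> ddist k \<xi>1 \<xi> < \<epsilon> \<and> \<bar>l1 - l\<bar> < \<epsilon>"
        unfolding Phiprime_def DeltaPhi_Gr by auto
      have "(a, \<xi>) \<in> Eprime X k E" unfolding Eprime_def using aX xi cl by blast
      moreover have "l - \<xi> P = 0"
      proof (rule small_zero)
        fix \<delta> :: real assume d: "\<delta> > 0"
        define \<epsilon> where "\<epsilon> = \<delta> / (C + 1)"
        have e: "\<epsilon> > 0" unfolding \<epsilon>_def using d C0 by simp
        then obtain a1 b1 \<xi>1 l1 where o: "(a1, b1, \<xi>1) \<in> DeltaE X k E" "l1 = \<xi>1 P"
          "ddist k \<xi>1 \<xi> < \<epsilon>" "\<bar>l1 - l\<bar> < \<epsilon>" using cl by blast
        have "\<bar>\<xi>1 P - \<xi> P\<bar> \<le> C * ddist k \<xi>1 \<xi>" using bnd DeltaE_dualk[OF inv o(1)] xi by blast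
        also have "\<dots> \<le> C * \<epsilon>" using o(3) C0 by (simp add: mult_left_mono)
        finally have "\<bar>l - \<xi> P\<bar> < (C + 1) * \<epsilon>" using o(2,4) by (simp add: algebra_simps)
        also have "(C + 1) * \<epsilon> = \<delta>" unfolding \<epsilon>_def using C0 by simp
        finally show "\<bar>l - \<xi> P\<bar> < \<delta>" .
      qed
      ultimately show "(a, \<xi>, l) \<in> Gr P (Eprime X k E)" unfolding Gr_def by simp
    next
      assume "(a, \<xi>, l) \<in> Gr P (Eprime X k E)"
      hence l: "l = \<xi> P" and aX: "a \<in> X" and xi: "\<xi> \<in> dualk k" and
        cl: "\<forall>\<epsilon>>0. \<exists>a1 b1 \<xi>1. (a1, b1, \<xi>1) \<in> DeltaE X k E \<and> dist a1 a < \<epsilon> \<and> dist b1 a < \<epsilon>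
          \<and> ddist k \<xi>1 \<xi> < \<epsilon>"
        unfolding Gr_def Eprime_def by auto
      have "\<forall>\<epsilon>>0. \<exists>a1 b1 \<xi>1 l1. (a1, b1, \<xi>1, l1) \<in> DeltaPhi X k (Gr P E) \<and> dist a1 a < \<epsilon> \<and> dist b1 a < \<epsilon>
          \<and> ddist k \<xi>1 \<xi> < \<epsilon> \<and> \<bar>l1 - l\<bar> < \<epsilon>"
      proof (intro allI impI)
        fix \<epsilon> :: real assume e: "\<epsilon> > 0"
        define \<epsilon>0 where "\<epsilon>0 = \<epsilon> / (C + 1)"
        have e0: "\<epsilon>0 > 0" unfolding \<epsilon>0_def using e C0 by simp
        have e0le: "\<epsilon>0 \<le> \<epsilon>" unfolding \<epsilon>0_def using e C0 by (simp add: divide_le_eq)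
        obtain a1 b1 \<xi>1 where o: "(a1, b1, \<xi>1) \<in> DeltaE X k E" "dist a1 a < \<epsilon>0" "dist b1 a < \<epsilon>0"
          "ddist k \<xi>1 \<xi> < \<epsilon>0" using cl e0 by blast
        have "\<bar>\<xi>1 P - \<xi> P\<bar> \<le> C * ddist k \<xi>1 \<xi>" using bnd DeltaE_dualk[OF inv o(1)] xi by blast
        also have "\<dots> \<le> C * \<epsilon>0" using o(4) C0 by (simp add: mult_left_mono)
        also have "\<dots> < \<epsilon>"
        proof -
          have "C * \<epsilon>0 < (C + 1) * \<epsilon>0" using e0 by simp
          also have "(C + 1) * \<epsilon>0 = \<epsilon>" unfolding \<epsilon>0_def using C0 by simp
          finally show ?thesis .
        qed
        finally have "\<bar>\<xi>1 P - l\<bar> < \<epsilon>" using l by simp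
        moreover have "(a1, b1, \<xi>1, \<xi>1 P) \<in> DeltaPhi X k (Gr P E)" unfolding DeltaPhi_Gr using o(1) by simp
        ultimately show "\<exists>a1 b1 \<xi>1 l1. (a1, b1, \<xi>1, l1) \<in> DeltaPhi X k (Gr P E) \<and> dist a1 a < \<epsilon> \<and> dist b1 a < \<epsilon>
          \<and> ddist k \<xi>1 \<xi> < \<epsilon> \<and> \<bar>l1 - l\<bar> < \<epsilon>"
          using o e0le by (intro exI[of _ a1] exI[of _ b1] exI[of _ \<xi>1] exI[of _ "\<xi>1 P"]) auto
      qed
      thus "(a, \<xi>, l) \<in> Phiprime X k (Gr P E)" unfolding Phiprime_def using aX xi by blast
    qed
  qed
qed

lemma mem_rhoPhi: "(a, \<xi>, l) \<in> rhoPhi X k \<Phi> \<longleftrightarrow> a \<in> X \<and> (\<exists>F c. finite F \<and> F \<subseteq> {(\<eta>, m). (a, \<eta>, m) \<in> Phiprime X k \<Phi>}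
      \<and> \<xi> = (\<lambda>P. \<Sum>(\<eta>, m)\<in>F. c (\<eta>, m) * \<eta> P) \<and> l = (\<Sum>(\<eta>, m)\<in>F. c (\<eta>, m) * m))"
  unfolding rhoPhi_def by simp

lemma rhoPhi_Gr:
  assumes inv: "Inv X k E" and P: "P \<in> Pk k"
  shows "rhoPhi X k (Gr P E) = Gr P (rhoE X k E)"
proof (rule set_eqI, clarify)
  fix a \<xi> l
  let ?T = "{\<eta>. (a, \<eta>) \<in> Eprime X k E}"
  have fib: "{(\<eta>, m). (a, \<eta>, m) \<in> Phiprime X k (Gr P E)} = {(\<eta>, m). \<eta> \<in> ?T \<and> m = \<eta> P}"
    unfolding Phiprime_Gr[OF inv P] unfolding Gr_def by auto
  show "((a, \<xi>, l) \<in> rhoPhi X k (Gr P E)) = ((a, \<xi>, l) \<in> Gr P (rhoE X k E))"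
  proof
    assume "(a, \<xi>, l) \<in> rhoPhi X k (Gr P E)"
    hence "a \<in> X \<and> (\<exists>F c. finite F \<and> F \<subseteq> {(\<eta>, m). (a, \<eta>, m) \<in> Phiprime X k (Gr P E)}
      \<and> \<xi> = (\<lambda>P. \<Sum>(\<eta>, m)\<in>F. c (\<eta>, m) * \<eta> P) \<and> l = (\<Sum>(\<eta>, m)\<in>F. c (\<eta>, m) * m))"
      by (rule mem_rhoPhi[THEN iffD1])
    then obtain F c where aX: "a \<in> X" and F: "finite F" and F2: "F \<subseteq> {(\<eta>, m). (a, \<eta>, m) \<in> Phiprime X k (Gr P E)}"
      and xi: "\<xi> = (\<lambda>P'. \<Sum>(\<eta>, m)\<in>F. c (\<eta>, m) * \<eta> P')" and l: "l = (\<Sum>(\<eta>, m)\<in>F. c (\<eta>, m) * m)"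
      by blast
    from F2 have F: "finite F" "F \<subseteq> {(\<eta>, m). \<eta> \<in> ?T \<and> m = \<eta> P}" using F unfolding fib by auto
    have inj: "inj_on fst F"
    proof (rule inj_onI)
      fix x y assume xy: "x \<in> F" "y \<in> F" "fst x = fst y"
      have "snd x = fst x P" "snd y = fst y P" using F(2) xy(1,2) by auto
      thus "x = y" using xy(3) by (simp add: prod_eq_iff)
    qed
    have sumeq: "(\<Sum>(\<eta>, m)\<in>F. c (\<eta>, m) * \<eta> P') = (\<Sum>\<eta>\<in>fst ` F. c (\<eta>, \<eta> P) * \<eta> P')" for P'
      unfolding sum.reindex[OF inj] using F(2) by (intro sum.cong refl) auto
    have "\<xi> \<in> fspan ?T"
      unfolding fspan_def
      by (rule CollectI, rule exI[of _ "fst ` F"], rule exI[of _ "\<lambda>\<eta>. c (\<eta>, \<eta> P)"])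
         (use F in \<open>auto simp: xi sumeq\<close>)
    moreover have "l = \<xi> P"
      unfolding l xi using F(2) by (intro sum.cong refl) auto
    ultimately show "(a, \<xi>, l) \<in> Gr P (rhoE X k E)" unfolding Gr_def rhoE_def using aX by simp
  next
    assume "(a, \<xi>, l) \<in> Gr P (rhoE X k E)"
    then obtain F c where aX: "a \<in> X" and l: "l = \<xi> P" and F: "finite F" "F \<subseteq> ?T"
      and xi: "\<xi> = (\<lambda>P'. \<Sum>\<eta>\<in>F. c \<eta> * \<eta> P')"
      unfolding Gr_def rhoE_def fspan_def by blast
    let ?G = "(\<lambda>\<eta>. (\<eta>, \<eta> P)) ` F"
    have inj: "inj_on (\<lambda>\<eta>. (\<eta>, \<eta> P)) F" by (auto simp: inj_on_def)
    have s1: "(\<Sum>(\<eta>, m)\<in>?G. c \<eta> * \<eta> P') = (\<Sum>\<eta>\<in>F. c \<eta> * \<eta> P')" for P'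
      unfolding sum.reindex[OF inj] by simp
    have s2: "(\<Sum>(\<eta>, m)\<in>?G. c \<eta> * m) = (\<Sum>\<eta>\<in>F. c \<eta> * \<eta> P)"
      unfolding sum.reindex[OF inj] by simp
    have "finite ?G" "?G \<subseteq> {(\<eta>, m). \<eta> \<in> ?T \<and> m = \<eta> P}" using F by auto
    moreover have "\<xi> = (\<lambda>P'. \<Sum>(\<eta>, m)\<in>?G. (\<lambda>(\<eta>, m). c \<eta>) (\<eta>, m) * \<eta> P')" using s1 xi by simp
    moreover have "l = (\<Sum>(\<eta>, m)\<in>?G. (\<lambda>(\<eta>, m). c \<eta>) (\<eta>, m) * m)" using s2 xi l by simp
    ultimately show "(a, \<xi>, l) \<in> rhoPhi X k (Gr P E)"
      unfolding mem_rhoPhi fib using aX by (intro conjI exI[of _ ?G] exI[of _ "\<lambda>(\<eta>, m). c \<eta>"]) auto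
  qed
qed

lemma Inv_rhoE: "Inv X k (rhoE X k E)"
proof -
  have "{\<eta>. (a, \<eta>) \<in> Eprime X k E} \<subseteq> dualk k" for a unfolding Eprime_def by auto
  thus ?thesis unfolding Inv_def rhoE_def using fspan_dualk by blast
qed

lemma Inv_E0: "Inv X k (E0 X k)"
  unfolding Inv_def E0_def using dualk_scale[OF deltaf_dualk] by blast

lemma iter_Gr: "P \<in> Pk k \<Longrightarrow> Inv X k ((rhoE X k ^^ m) (E0 X k)) \<and>
   (rhoPhi X k ^^ m) (Phi0 X k P) = Gr P ((rhoE X k ^^ m) (E0 X k))"
proof (induction m)
  case 0 thus ?case using Inv_E0[of X k] Phi0_Gr[of P k X] by simp
next
  case (Suc m)
  hence i: "Inv X k ((rhoE X k ^^ m) (E0 X k))"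
    and e: "(rhoPhi X k ^^ m) (Phi0 X k P) = Gr P ((rhoE X k ^^ m) (E0 X k))" by auto
  show ?case using Inv_rhoE[of X k] rhoPhi_Gr[OF i Suc.prems] e by simp
qed

definition Zr :: "('n::finite) rv set \<Rightarrow> ('n rv \<times> (('n rv \<Rightarrow> real) \<Rightarrow> real)) set \<Rightarrow> bool" where
  "Zr X E = (\<forall>a\<in>X. (a, \<lambda>_. 0) \<in> E)"

lemma Zr_E0: "Zr X (E0 X k)"
  unfolding Zr_def E0_def by (auto intro!: exI[of _ 0])

lemma Zr_rhoE: "Zr X (rhoE X k E)"
  unfolding Zr_def rhoE_def using fspan_zero by auto

lemma rhoE_mono: "Inv X k E \<Longrightarrow> Zr X E \<Longrightarrow> E \<subseteq> rhoE X k E"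
proof clarify
  fix a \<xi> assume inv: "Inv X k E" and z: "Zr X E" and e: "(a, \<xi>) \<in> E"
  have aX: "a \<in> X" and xi: "\<xi> \<in> dualk k" using inv e unfolding Inv_def by auto
  have z0: "(a, \<lambda>_. 0) \<in> E" using z aX unfolding Zr_def by blast
  have eq: "\<xi> = (\<lambda>P. \<xi> P + (\<lambda>_. 0) P)" by simp
  have cond: "\<forall>\<alpha>\<in>mi k. dist a a ^ (k - mdeg \<alpha>) * \<bar>xi_alpha (\<lambda>_. 0) \<alpha> a\<bar> \<le> 1"
    by (simp add: xi_alpha_def)
  have "(a, a, \<xi>) \<in> DeltaE X k E"
    unfolding DeltaE_def using aX e z0 eq cond by blast
  note D = this
  have dd: "ddist k \<xi> \<xi> = 0" by (simp add: ddist_def)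
  have "\<forall>\<epsilon>>0. \<exists>a1 b1 \<xi>1. (a1, b1, \<xi>1) \<in> DeltaE X k E \<and> dist a1 a < \<epsilon> \<and> dist b1 a < \<epsilon> \<and> ddist k \<xi>1 \<xi> < \<epsilon>"
  proof (intro allI impI)
    fix \<epsilon> :: real assume "\<epsilon> > 0"
    thus "\<exists>a1 b1 \<xi>1. (a1, b1, \<xi>1) \<in> DeltaE X k E \<and> dist a1 a < \<epsilon> \<and> dist b1 a < \<epsilon> \<and> ddist k \<xi>1 \<xi> < \<epsilon>"
      using D dd by (intro exI[of _ a] exI[of _ a] exI[of _ \<xi>]) simp
  qed
  hence "(a, \<xi>) \<in> Eprime X k E" unfolding Eprime_def using aX xi by simp
  hence "\<xi> \<in> fspan {\<eta>. (a, \<eta>) \<in> Eprime X k E}" by (intro fspan_base) simp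
  thus "(a, \<xi>) \<in> rhoE X k E" unfolding rhoE_def using aX by simp
qed

lemma iter_props: "Inv X k ((rhoE X k ^^ m) (E0 X k)) \<and> Zr X ((rhoE X k ^^ m) (E0 X k))"
  by (induction m) (auto simp: Inv_E0 Zr_E0 Inv_rhoE Zr_rhoE)

lemma iter_mono: "(rhoE X k ^^ m) (E0 X k) \<subseteq> (rhoE X k ^^ (m + j)) (E0 X k)"
proof (induction j)
  case 0 thus ?case by simp
next
  case (Suc j)
  have "(rhoE X k ^^ (m + j)) (E0 X k) \<subseteq> rhoE X k ((rhoE X k ^^ (m + j)) (E0 X k))"
    using rhoE_mono iter_props by blast
  thus ?case using Suc by simp
qed

lemma fspan_vanish: "\<forall>\<eta>\<in>S. \<eta> P = 0 \<Longrightarrow> \<eta> \<in> fspan S \<Longrightarrow> \<eta> P = 0"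
  unfolding fspan_def by (auto intro!: sum.neutral)

lemma pda_pdl_all: "\<exists>l. (\<forall>F. pda \<alpha> F = pdl l F) \<and> length l = mdeg \<alpha>"
proof -
  let ?l = "SOME l. \<forall>i. count_list l i = \<alpha> i"
  have "\<forall>i. count_list ?l i = \<alpha> i" using someI_ex[OF count_list_exists[of \<alpha>]] .
  thus ?thesis unfolding pda_def using length_count by blast
qed



theorem corollary2p4:
  fixes X :: "('n::finite) rv set" and qX :: "nat \<Rightarrow> nat" and s p q :: nat
  assumes "compact X" and "subanalytic X"
    and "\<forall>p. qX p \<ge> p"
    and "\<forall>p' (f :: 'n rv \<Rightarrow> real) q'. q' \<ge> qX p' \<longrightarrow> nabla_is_fun X q' f \<longrightarrow>
           ((\<exists>F. Cp p' F \<and> (\<forall>x\<in>X. F x = f x)) \<and>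
            (\<forall>a\<in>X. nabla_zero_at X q' f a \<longrightarrow>
               (\<exists>F. Cp p' F \<and> (\<forall>x\<in>X. F x = f x) \<and> pflat p' F a)))"
    and "s \<ge> p" and "q \<ge> qX s"
  shows "\<forall>a\<in>X. Tcal_p X s p a \<subseteq> tau_p X q p a"
proof (intro ballI subsetI)
  fix a \<xi> assume aX: "a \<in> X" and xiT: "\<xi> \<in> Tcal_p X s p a"
  have xi: "\<xi> \<in> dualk p" and van: "\<forall>h. Cp s h \<and> (\<forall>x\<in>X. h x = 0) \<longrightarrow> \<xi> (taylor p a h) = 0"
    using xiT unfolding Tcal_p_def by auto
  let ?\<zeta> = "iota q p a \<xi>"
  have zeta: "?\<zeta> \<in> dualk q" by (rule iota_dualk[OF xi])
  define r where "r = card (mi q :: ('n \<Rightarrow> nat) set)"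
  have "(\<lambda>_. 0) \<in> (mi q :: ('n \<Rightarrow> nat) set)" by (simp add: mi_def)
  hence r1: "r \<ge> 1" unfolding r_def using finite_mi[of q]
    by (metis One_nat_def Suc_leI card_gt_0_iff empty_iff)
  define Em where "Em = (rhoE X q ^^ (2 * r - 1)) (E0 X q)"
  have tw: "2 * r = Suc (2 * r - 1)" using r1 by simp
  have ptau_eq: "ptau X q = rhoE X q Em"
    unfolding ptau_def r_def[symmetric] Em_def by (subst tw) simp
  let ?S = "{\<eta>. (a, \<eta>) \<in> Eprime X q Em}"
  have Sd: "?S \<subseteq> dualk q" unfolding Eprime_def by auto
  show "\<xi> \<in> tau_p X q p a"
  proof (rule ccontr)
    assume nt: "\<xi> \<notin> tau_p X q p a"
    hence "(a, ?\<zeta>) \<notin> ptau X q" using xi unfolding tau_p_def by auto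
    hence nz: "?\<zeta> \<notin> fspan ?S" unfolding ptau_eq rhoE_def using aX by auto
    obtain P where P: "P \<in> Pk q" "\<forall>\<eta>\<in>?S. \<eta> P = 0" "?\<zeta> P \<noteq> 0"
      using separation[OF Sd zeta nz] by blast
    have fib0: "\<eta> P = 0" if "(a, \<eta>) \<in> ptau X q" for \<eta>
    proof -
      have "\<eta> \<in> fspan ?S" using that unfolding ptau_eq rhoE_def by auto
      thus ?thesis using fspan_vanish P(2) by blast
    qed
    have graph: "pnabla X q P = Gr P ((rhoE X q ^^ (2 * r + 2)) (E0 X q))"
    proof -
      have "2 * (r + 1) = 2 * r + 2" by simp
      thus ?thesis unfolding pnabla_def r_def[symmetric] using iter_Gr[OF P(1), of X "2 * r + 2"] by simp
    qed
    have sub: "ptau X q \<subseteq> (rhoE X q ^^ (2 * r + 2)) (E0 X q)"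
      unfolding ptau_def r_def[symmetric] by (rule iter_mono)
    have nf: "nabla_is_fun X q P"
      unfolding nabla_is_fun_def
    proof (intro ballI allI impI)
      fix a' \<eta> assume "a' \<in> X" "(a', \<eta>) \<in> ptau X q"
      hence "(a', \<eta>, \<eta> P) \<in> pnabla X q P" using sub unfolding graph Gr_def by auto
      moreover have "l = \<eta> P" if "(a', \<eta>, l) \<in> pnabla X q P" for l
        using that unfolding graph Gr_def by auto
      ultimately show "\<exists>!l. (a', \<eta>, l) \<in> pnabla X q P" by blast
    qed
    have nzero: "nabla_zero_at X q P a"
      unfolding nabla_zero_at_def
    proof (intro allI impI)
      fix \<eta> assume h: "(a, \<eta>) \<in> ptau X q"
      have "nabla_val X q P a \<eta> = \<eta> P"
        unfolding nabla_val_def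
      proof (rule the_equality)
        show "(a, \<eta>, \<eta> P) \<in> pnabla X q P" using h sub unfolding graph Gr_def by auto
      next
        fix l assume "(a, \<eta>, l) \<in> pnabla X q P"
        thus "l = \<eta> P" unfolding graph Gr_def by auto
      qed
      thus "nabla_val X q P a \<eta> = 0" using fib0[OF h] by simp
    qed
    have "\<forall>a\<in>X. nabla_zero_at X q P a \<longrightarrow> (\<exists>F. Cp s F \<and> (\<forall>x\<in>X. F x = P x) \<and> pflat s F a)"
      using assms(4) assms(6) nf by blast
    then obtain F where F: "Cp s F" "\<forall>x\<in>X. F x = P x" "pflat s F a" using aX nzero by blast
    define h where "h = (\<lambda>x. 1 * F x + (-1) * P x)"
    have cP: "Cp s P" using Pk_Cp[OF P(1)] .
    have ch: "Cp s h" unfolding h_def by (rule Cp_lin[OF F(1) cP])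
    have hX: "\<forall>x\<in>X. h x = 0" using F(2) unfolding h_def by simp
    have z1: "\<xi> (taylor p a h) = 0" using van ch hX by blast
    have pd: "pda \<alpha> h a = - pda \<alpha> P a" if "\<alpha> \<in> mi p" for \<alpha>
    proof -
      obtain l where l: "\<forall>G. pda \<alpha> G = pdl l G" "length l = mdeg \<alpha>" using pda_pdl_all by blast
      have len: "length l \<le> s" using l(2) that assms(5) by (simp add: mi_def mdeg_def)
      have "pdl l h = (\<lambda>x. 1 * pdl l F x + (-1) * pdl l P x)" unfolding h_def by (rule pdl_lin[OF F(1) cP len])
      moreover have "pdl l F a = 0" using F(3) len unfolding pflat_def by blast
      ultimately show ?thesis using l(1) by simp
    qed
    have tay: "taylor p a h = (\<lambda>x. (-1) * taylor p a P x)"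
    proof (rule ext)
      fix x
      have "taylor p a h x = (\<Sum>\<alpha>\<in>mi p. - (pda \<alpha> P a / afact \<alpha> * mono_at a \<alpha> x))"
        unfolding taylor_def by (intro sum.cong refl) (simp add: pd)
      also have "\<dots> = (-1) * taylor p a P x" unfolding taylor_def by (simp add: sum_negf)
      finally show "taylor p a h x = (-1) * taylor p a P x" .
    qed
    have "\<xi> (taylor p a h) = (-1) * \<xi> (taylor p a P)" unfolding tay by (rule dual_scale[OF xi taylor_Pk])
    hence "\<xi> (taylor p a P) = 0" using z1 by simp
    moreover have "?\<zeta> P = \<xi> (taylor p a P)" using P(1) unfolding iota_def by simp
    ultimately show False using P(3) by simp
  qed
qed

end
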